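(* Let $G$ be a simple graph with at least one edge, maximum degree $\Delta(G)$ and $t(G)$ triangles. If $t(G)\le\lfloor(\Delta(G)+1)/3\rfloor$, then $\lambda_1=\mu_1$, where $\lambda_1$ is the largest $\mathcal{H}$-eigenvalue of $G$ and $\mu_1$ is the largest Laplacian eigenvalue of $G$.
   Context: For an oriented edge $e$ write $e^-$ for its tail and $e^+$ for its head. For distinct edges $e,e'$: $e\leftrightarrow e'$ means $e^+=e'^-$ or $e'^+=e^-$; $e\overset{\pm}{\sim}e'$ means $e^+=e'^+$ or $e^-=e'^-$; $e\vartriangle e'$ means $e,e'$ are two edges of a common triangle. $\triangle(e)$ is the number of triangles containing $e$. The Helmholtzian matrix $\mathcal{H}(G)=(h_{ee'})$ is indexed by edges, with $h_{ee}=\triangle(e)+2$, and for $e\ne e'$: $h_{ee'}=-1$ if $e\leftrightarrow e'$ and not $e\vartriangle e'$; $h_{ee'}=1$ if $e\overset{\pm}{\sim}e'$ and not $e\vartriangle e'$; $h_{ee'}=0$ otherwise. The $\mathcal{H}$-eigenvalues are the eigenvalues of $\mathcal{H}(G)$ for an arbitrary orientation (independent of the orientation). The Laplacian matrix is $L(G)=D(G)-A(G)$. *)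

theory Defs
  imports Complex_Main
begin

definition simple_graph :: "'a set \<Rightarrow> 'a set set \<Rightarrow> bool" where
  "simple_graph V E \<longleftrightarrow> finite V \<and> (\<forall>e\<in>E. \<exists>u v. u \<in> V \<and> v \<in> V \<and> u \<noteq> v \<and> e = {u, v})"

definition degree :: "'a set set \<Rightarrow> 'a \<Rightarrow> nat" where
  "degree E v = card {e\<in>E. v \<in> e}"

definition max_degree :: "'a set \<Rightarrow> 'a set set \<Rightarrow> nat" where
  "max_degree V E = Max (degree E ` V)"

definition is_triangle :: "'a set \<Rightarrow> 'a set set \<Rightarrow> 'a set \<Rightarrow> bool" where
  "is_triangle V E T \<longleftrightarrow> T \<subseteq> V \<and> card T = 3 \<and>
     (\<forall>u\<in>T. \<forall>v\<in>T. u \<noteq> v \<longrightarrow> {u, v} \<in> E)"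

definition num_triangles :: "'a set \<Rightarrow> 'a set set \<Rightarrow> nat" where
  "num_triangles V E = card {T. is_triangle V E T}"

definition orientation :: "'a set set \<Rightarrow> ('a \<times> 'a) set \<Rightarrow> bool" where
  "orientation E Or \<longleftrightarrow> (\<forall>p\<in>Or. {fst p, snd p} \<in> E) \<and>
     (\<forall>e\<in>E. \<exists>!p. p \<in> Or \<and> {fst p, snd p} = e)"

text \<open>For oriented edge p: tail = fst p, head = snd p.\<close>

definition tri_count :: "'a set \<Rightarrow> 'a set set \<Rightarrow> 'a \<times> 'a \<Rightarrow> nat" where
  "tri_count V E p = card {T. is_triangle V E T \<and> {fst p, snd p} \<subseteq> T}"

definition in_common_triangle :: "'a set \<Rightarrow> 'a set set \<Rightarrow> 'a \<times> 'a \<Rightarrow> 'a \<times> 'a \<Rightarrow> bool" where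
  "in_common_triangle V E p q \<longleftrightarrow>
     (\<exists>T. is_triangle V E T \<and> {fst p, snd p} \<subseteq> T \<and> {fst q, snd q} \<subseteq> T)"

definition head_tail_adj :: "'a \<times> 'a \<Rightarrow> 'a \<times> 'a \<Rightarrow> bool" where
  "head_tail_adj p q \<longleftrightarrow> snd p = fst q \<or> snd q = fst p"

definition same_end_adj :: "'a \<times> 'a \<Rightarrow> 'a \<times> 'a \<Rightarrow> bool" where
  "same_end_adj p q \<longleftrightarrow> snd p = snd q \<or> fst p = fst q"

definition helmholtzian :: "'a set \<Rightarrow> 'a set set \<Rightarrow> 'a \<times> 'a \<Rightarrow> 'a \<times> 'a \<Rightarrow> real" where
  "helmholtzian V E p q =
     (if p = q then real (tri_count V E p) + 2
      else if head_tail_adj p q \<and> \<not> in_common_triangle V E p q then -1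
      else if same_end_adj p q \<and> \<not> in_common_triangle V E p q then 1
      else 0)"

definition laplacian :: "'a set set \<Rightarrow> 'a \<Rightarrow> 'a \<Rightarrow> real" where
  "laplacian E u v = (if u = v then real (degree E u) else if {u, v} \<in> E then -1 else 0)"

text \<open>Both matrices considered are real symmetric, so all
  their eigenvalues are real.\<close>

definition is_eigenvalue :: "'i set \<Rightarrow> ('i \<Rightarrow> 'i \<Rightarrow> real) \<Rightarrow> real \<Rightarrow> bool" where
  "is_eigenvalue I M c \<longleftrightarrow> (\<exists>x. (\<exists>i\<in>I. x i \<noteq> 0) \<and>
     (\<forall>i\<in>I. (\<Sum>j\<in>I. M i j * x j) = c * x i))"

definition largest_eigenvalue :: "'i set \<Rightarrow> ('i \<Rightarrow> 'i \<Rightarrow> real) \<Rightarrow> real" where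
  "largest_eigenvalue I M = Max {c. is_eigenvalue I M c}"

end

theory Submission
  imports Defs "Jordan_Normal_Form.Char_Poly" "HOL-Analysis.Analysis"
begin

definition mv :: "'i set \<Rightarrow> ('i \<Rightarrow> 'i \<Rightarrow> real) \<Rightarrow> ('i \<Rightarrow> real) \<Rightarrow> 'i \<Rightarrow> real" where
  "mv I M x i = (\<Sum>j\<in>I. M i j * x j)"

definition ip :: "'i set \<Rightarrow> ('i \<Rightarrow> real) \<Rightarrow> ('i \<Rightarrow> real) \<Rightarrow> real" where
  "ip I x y = (\<Sum>i\<in>I. x i * y i)"

lemma ip_sym: "ip I x y = ip I y x" unfolding ip_def by (simp add: mult.commute)

lemma ip_self_nonneg: "ip I x x \<ge> 0" unfolding ip_def by (simp add: sum_nonneg)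

lemma ip_self_zero: "finite I \<Longrightarrow> ip I x x = 0 \<Longrightarrow> i \<in> I \<Longrightarrow> x i = 0"
  unfolding ip_def using sum_nonneg_eq_0_iff[of I "\<lambda>i. x i * x i"] by auto

lemma ip_pos: "finite I \<Longrightarrow> i \<in> I \<Longrightarrow> x i \<noteq> 0 \<Longrightarrow> ip I x x > 0"
  using ip_self_zero[of I x i] ip_self_nonneg[of I x] by force

lemma mv_sym:
  assumes sym: "\<And>i j. i \<in> I \<Longrightarrow> j \<in> I \<Longrightarrow> M i j = M j i"
  shows "ip I x (mv I M y) = ip I y (mv I M x)"
proof -
  have "ip I x (mv I M y) = (\<Sum>i\<in>I. \<Sum>j\<in>I. x i * M i j * y j)"
    unfolding ip_def mv_def by (simp add: sum_distrib_left mult.assoc)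
  also have "\<dots> = (\<Sum>j\<in>I. \<Sum>i\<in>I. x i * M i j * y j)" by (rule sum.swap)
  also have "\<dots> = (\<Sum>j\<in>I. \<Sum>i\<in>I. y j * M j i * x i)"
    by (intro sum.cong refl) (simp add: sym mult.commute mult.left_commute)
  also have "\<dots> = ip I y (mv I M x)"
    unfolding ip_def mv_def by (simp add: sum_distrib_left mult.assoc)
  finally show ?thesis .
qed

lemma mv_lin: "mv I M (\<lambda>i. x i + t * y i) j = mv I M x j + t * mv I M y j"
  unfolding mv_def by (simp add: algebra_simps sum.distrib sum_distrib_left)

lemma mv_lin_fun: "mv I M (\<lambda>i. x i + t * y i) = (\<lambda>j. mv I M x j + t * mv I M y j)"
  by (rule ext) (rule mv_lin)

lemma ip_lin1: "ip I (\<lambda>i. x i + t * y i) z = ip I x z + t * ip I y z"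
  unfolding ip_def by (simp add: algebra_simps sum.distrib sum_distrib_left)

lemma ip_lin2: "ip I z (\<lambda>i. x i + t * y i) = ip I z x + t * ip I z y"
  unfolding ip_def by (simp add: algebra_simps sum.distrib sum_distrib_left)

lemma ip_scale1: "ip I (\<lambda>i. t * x i) z = t * ip I x z"
  unfolding ip_def by (simp add: algebra_simps sum_distrib_left)
lemma ip_scale2: "ip I z (\<lambda>i. t * x i) = t * ip I z x"
  unfolding ip_def by (simp add: algebra_simps sum_distrib_left)
lemma mv_scale: "mv I M (\<lambda>i. t * x i) j = t * mv I M x j"
  unfolding mv_def by (simp add: algebra_simps sum_distrib_left)

lemma ip_cong: "(\<And>i. i \<in> I \<Longrightarrow> x i = x' i) \<Longrightarrow> (\<And>i. i \<in> I \<Longrightarrow> y i = y' i) \<Longrightarrow> ip I x y = ip I x' y'"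
  unfolding ip_def by simp
lemma mv_cong: "(\<And>i. i \<in> I \<Longrightarrow> x i = x' i) \<Longrightarrow> mv I M x j = mv I M x' j"
  unfolding mv_def by simp

lemma psd_kernel:
  assumes fin: "finite I"
    and sym: "\<And>i j. i \<in> I \<Longrightarrow> j \<in> I \<Longrightarrow> M i j = M j i"
    and psd: "\<And>y. ip I y (mv I M y) \<ge> 0"
    and z: "ip I l (mv I M l) = 0"
  shows "\<And>i. i \<in> I \<Longrightarrow> mv I M l i = 0"
proof -
  define g where "g = mv I M l"
  define a where "a = ip I g g"
  define G where "G = ip I g (mv I M g)"
  have G0: "G \<ge> 0" unfolding G_def by (rule psd)
  have a0: "a \<ge> 0" unfolding a_def by (rule ip_self_nonneg)
  have key: "ip I (\<lambda>i. l i + t * g i) (mv I M (\<lambda>i. l i + t * g i)) = 2 * t * a + t^2 * G" for t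
  proof -
    have "ip I (\<lambda>i. l i + t * g i) (mv I M (\<lambda>i. l i + t * g i))
        = ip I (\<lambda>i. l i + t * g i) (\<lambda>j. mv I M l j + t * mv I M g j)"
      by (simp add: mv_lin_fun)
    also have "\<dots> = ip I l (mv I M l) + t * ip I l (mv I M g) + t * (ip I g (mv I M l) + t * ip I g (mv I M g))"
      by (simp add: ip_lin1 ip_lin2 algebra_simps)
    also have "ip I l (mv I M g) = ip I g (mv I M l)" by (rule mv_sym[OF sym])
    finally show ?thesis using z unfolding a_def G_def g_def by (simp add: power2_eq_square algebra_simps)
  qed
  have "a = 0"
  proof (rule ccontr)
    assume "a \<noteq> 0" hence ap: "a > 0" using a0 by simp
    define t where "t = - a / (G + 1)"
    have "0 \<le> 2 * t * a + t^2 * G" using psd[of "\<lambda>i. l i + t * g i"] key[of t] by simp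
    also have "2 * t * a + t^2 * G = a^2 * (G - 2 * (G + 1)) / (G+1)^2"
      unfolding t_def using G0 by (simp add: power2_eq_square divide_simps) (simp add: algebra_simps)
    also have "\<dots> < 0" using ap G0 by (intro divide_neg_pos mult_pos_neg) auto
    finally show False by simp
  qed
  thus "\<And>i. i \<in> I \<Longrightarrow> mv I M l i = 0" using ip_self_zero[OF fin] unfolding a_def g_def by blast
qed

lemma mv_shift: "finite I \<Longrightarrow> i \<in> I \<Longrightarrow> mv I (\<lambda>i j. (if i = j then s else 0) - M i j) y i = s * y i - mv I M y i"
proof -
  assume fin: "finite I" and i: "i \<in> I"
  have "(\<Sum>j\<in>I. ((if i = j then s else 0) - M i j) * y j) = (\<Sum>j\<in>I. (if i = j then s * y j else 0) - M i j * y j)"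
    by (intro sum.cong refl) (simp add: left_diff_distrib)
  also have "\<dots> = (\<Sum>j\<in>I. (if i = j then s * y j else 0)) - (\<Sum>j\<in>I. M i j * y j)"
    by (simp add: sum_subtractf)
  also have "\<dots> = s * y i - (\<Sum>j\<in>I. M i j * y j)" using fin i by simp
  finally show ?thesis unfolding mv_def .
qed

lemma top_eig_exists:
  assumes fin: "finite I" and ne: "I \<noteq> {}"
    and sym: "\<And>i j. i \<in> I \<Longrightarrow> j \<in> I \<Longrightarrow> M i j = M j i"
  shows "\<exists>s l. (\<exists>i\<in>I. l i \<noteq> 0) \<and> (\<forall>i\<in>I. mv I M l i = s * l i) \<and>
           (\<forall>y. ip I y (mv I M y) \<le> s * ip I y y)"
proof -
  define S where "S = {x. ip I x x = 1}"
  define Q where "Q x = ip I x (mv I M x)" for x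
  define K where "K = (\<Sum>i\<in>I. \<Sum>j\<in>I. \<bar>M i j\<bar>)"
  have bnd1: "\<bar>x i\<bar> \<le> 1" if "x \<in> S" "i \<in> I" for x i
  proof -
    have "x i * x i \<le> ip I x x" unfolding ip_def
      using member_le_sum[of i I "\<lambda>i. x i * x i"] fin that(2) by auto
    hence "(x i)^2 \<le> 1" using that(1) unfolding S_def by (simp add: power2_eq_square)
    thus ?thesis by (simp add: abs_square_le_1)
  qed
  have bndQ: "Q x \<le> K" if "x \<in> S" for x
  proof -
    have "Q x = (\<Sum>i\<in>I. \<Sum>j\<in>I. x i * M i j * x j)"
      unfolding Q_def ip_def mv_def by (simp add: sum_distrib_left mult.assoc)
    also have "\<dots> \<le> (\<Sum>i\<in>I. \<Sum>j\<in>I. \<bar>M i j\<bar>)"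
    proof (intro sum_mono)
      fix i j assume ij: "i \<in> I" "j \<in> I"
      have "x i * M i j * x j \<le> \<bar>x i * M i j * x j\<bar>" by simp
      also have "\<dots> = \<bar>x i\<bar> * \<bar>x j\<bar> * \<bar>M i j\<bar>" by (simp add: abs_mult)
      also have "\<dots> \<le> 1 * 1 * \<bar>M i j\<bar>"
        by (intro mult_right_mono mult_mono bnd1 that ij) auto
      finally show "x i * M i j * x j \<le> \<bar>M i j\<bar>" by simp
    qed
    finally show ?thesis unfolding K_def .
  qed
  obtain i0 where i0: "i0 \<in> I" using ne by auto
  define e0 where "e0 = (\<lambda>i. if i = i0 then 1 else (0::real))"
  have "e0 \<in> S" unfolding S_def ip_def e0_def using fin i0 by (simp add: if_distrib cong: if_cong)
  hence Sne: "Q ` S \<noteq> {}" by auto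
  have bdd: "bdd_above (Q ` S)" using bndQ by (intro bdd_aboveI[of _ K]) auto
  define s where "s = Sup (Q ` S)"
  have "\<exists>x\<in>S. s - 1 / real (Suc n) < Q x" for n
  proof -
    have "s - 1 / real (Suc n) < s" by simp
    thus ?thesis unfolding s_def using less_cSup_iff[OF Sne bdd] by auto
  qed
  then obtain xs where xs: "\<And>n. xs n \<in> S" "\<And>n. s - 1 / real (Suc n) < Q (xs n)" by metis
  have "\<forall>d\<subseteq>I. \<exists>l. \<exists>r::nat\<Rightarrow>nat. strict_mono r \<and>
      (\<forall>e>0. eventually (\<lambda>n. \<forall>i\<in>d. dist (xs (r n) i) (l i) < e) sequentially)"
  proof (rule compact_lemma_general[where proj = "\<lambda>x k. x k" and unproj = "\<lambda>x. x"])
    fix k assume "k \<in> I"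
    thus "bounded ((\<lambda>x. x k) ` range xs)"
      using bnd1[OF xs(1)] unfolding bounded_iff by (intro exI[of _ 1]) auto
  qed (use fin in auto)
  then obtain l and r :: "nat \<Rightarrow> nat" where r: "strict_mono r"
    and conv: "\<forall>e>0. eventually (\<lambda>n. \<forall>i\<in>I. dist (xs (r n) i) (l i) < e) sequentially"
    by blast
  have lim: "(\<lambda>n. xs (r n) i) \<longlonglongrightarrow> l i" if "i \<in> I" for i
    unfolding tendsto_iff
  proof (intro allI impI)
    fix e :: real assume "e > 0"
    with conv have "eventually (\<lambda>n. \<forall>i\<in>I. dist (xs (r n) i) (l i) < e) sequentially" by auto
    thus "eventually (\<lambda>n. dist (xs (r n) i) (l i) < e) sequentially"
      by eventually_elim (use that in auto)
  qed
  have limip: "(\<lambda>n. ip I (xs (r n)) (xs (r n))) \<longlonglongrightarrow> ip I l l"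
    unfolding ip_def by (intro tendsto_sum tendsto_mult lim)
  have "(\<lambda>n. ip I (xs (r n)) (xs (r n))) = (\<lambda>n. 1)" using xs(1) unfolding S_def by auto
  with limip have "ip I l l = 1" using LIMSEQ_unique tendsto_const by metis
  hence lS: "l \<in> S" unfolding S_def by simp
  have limQ: "(\<lambda>n. Q (xs (r n))) \<longlonglongrightarrow> Q l"
    unfolding Q_def ip_def mv_def by (intro tendsto_sum tendsto_mult lim tendsto_const)
  have Ql: "Q l = s"
  proof (rule antisym)
    show "Q l \<le> s" unfolding s_def using lS bdd by (intro cSup_upper) auto
    show "s \<le> Q l"
    proof (rule field_le_epsilon)
      fix e :: real assume "e > 0"
      then obtain m where m: "inverse (real (Suc m)) < e" using reals_Archimedean by blast
      have "s - 1 / real (Suc m) \<le> Q l"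
      proof (rule LIMSEQ_le_const[OF limQ], intro exI[of _ m] allI impI)
        fix n assume "m \<le> n"
        hence "m \<le> r n" using seq_suble[OF r, of n] by simp
        hence "1 / real (Suc (r n)) \<le> 1 / real (Suc m)" by (simp add: frac_le)
        thus "s - 1 / real (Suc m) \<le> Q (xs (r n))" using xs(2)[of "r n"] by simp
      qed
      thus "s \<le> Q l + e" using m by (simp add: inverse_eq_divide)
    qed
  qed
  have ray: "ip I y (mv I M y) \<le> s * ip I y y" for y
  proof (cases "ip I y y = 0")
    case True
    hence "\<And>i. i \<in> I \<Longrightarrow> y i = 0" using ip_self_zero[OF fin] by blast
    hence "ip I y (mv I M y) = 0" unfolding ip_def by simp
    thus ?thesis using True by simp
  next
    case False
    define nu where "nu = sqrt (ip I y y)"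
    have nu: "nu > 0" using False ip_self_nonneg[of I y] unfolding nu_def by simp
    have nu2: "nu * nu = ip I y y" unfolding nu_def using ip_self_nonneg[of I y] by simp
    define y' where "y' = (\<lambda>i. (1 / nu) * y i)"
    have s1: "ip I y' z = (1/nu) * ip I y z" for z unfolding y'_def by (rule ip_scale1)
    have s2: "ip I z y' = (1/nu) * ip I z y" for z unfolding y'_def by (rule ip_scale2)
    have s3: "mv I M y' = (\<lambda>j. (1/nu) * mv I M y j)" unfolding y'_def by (rule ext) (rule mv_scale)
    have "ip I y' y' = (1/nu) * (1/nu) * ip I y y" unfolding s1 s2 by simp
    also have "\<dots> = 1" using nu2 nu False by (simp add: field_simps)
    finally have "y' \<in> S" unfolding S_def by simp
    hence "Q y' \<le> s" unfolding s_def using bdd by (intro cSup_upper) auto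
    moreover have "Q y' = (1/nu) * (1/nu) * ip I y (mv I M y)"
      unfolding Q_def s3 s1 ip_scale2 by simp
    ultimately have "(1/nu) * (1/nu) * ip I y (mv I M y) \<le> s" by simp
    hence "ip I y (mv I M y) \<le> s * (nu * nu)" using nu by (simp add: field_simps)
    thus ?thesis using nu2 by simp
  qed
  define M' where "M' = (\<lambda>i j. (if i = j then s else 0) - M i j)"
  have ipM': "ip I y (mv I M' y) = s * ip I y y - ip I y (mv I M y)" for y
  proof -
    have "ip I y (mv I M' y) = ip I y (\<lambda>i. s * y i - mv I M y i)"
      unfolding M'_def by (rule ip_cong) (simp_all add: mv_shift fin)
    also have "\<dots> = s * ip I y y - ip I y (mv I M y)"
      unfolding ip_def by (simp add: algebra_simps sum_subtractf sum_distrib_left)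
    finally show ?thesis .
  qed
  have ker: "\<And>i. i \<in> I \<Longrightarrow> mv I M' l i = 0"
  proof (rule psd_kernel[OF fin])
    show "M' i j = M' j i" if "i \<in> I" "j \<in> I" for i j using sym[OF that] unfolding M'_def by auto
    show "ip I y (mv I M' y) \<ge> 0" for y using ray[of y] ipM'[of y] by simp
    show "ip I l (mv I M' l) = 0" using ipM'[of l] Ql lS unfolding S_def Q_def by simp
  qed
  have "\<forall>i\<in>I. mv I M l i = s * l i"
    using ker unfolding M'_def by (simp add: mv_shift fin)
  moreover have "\<exists>i\<in>I. l i \<noteq> 0"
  proof (rule ccontr)
    assume "\<not> ?thesis" hence "ip I l l = 0" unfolding ip_def by simp
    thus False using lS unfolding S_def by simp
  qed
  ultimately show ?thesis using ray by blast
qed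

lemma eig_finite:
  assumes fin: "finite I"
  shows "finite {c. is_eigenvalue I M c}"
proof -
  define n where "n = card I"
  obtain f where f: "bij_betw f {0..<n} I" using ex_bij_betw_nat_finite[OF fin] n_def by blast
  define A :: "real Matrix.mat" where "A = Matrix.mat n n (\<lambda>(i,j). M (f i) (f j))"
  have A: "A \<in> carrier_mat n n" unfolding A_def by simp
  have sub: "{c. is_eigenvalue I M c} \<subseteq> {c. poly (char_poly A) c = 0}"
  proof
    fix c assume "c \<in> {c. is_eigenvalue I M c}"
    then obtain x where x0: "\<exists>i\<in>I. x i \<noteq> 0" and ex: "\<forall>i\<in>I. (\<Sum>j\<in>I. M i j * x j) = c * x i"
      unfolding is_eigenvalue_def by auto
    define v where "v = Matrix.vec n (\<lambda>i. x (f i))"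
    have v: "v \<in> carrier_vec n" unfolding v_def by simp
    have v0: "v \<noteq> 0\<^sub>v n"
    proof
      assume "v = 0\<^sub>v n"
      from x0 obtain i where i: "i \<in> I" "x i \<noteq> 0" by auto
      then obtain k where k: "k < n" "f k = i" using f unfolding bij_betw_def by auto
      have "v $ k = 0" using \<open>v = 0\<^sub>v n\<close> k by simp
      then show False using k i unfolding v_def by simp
    qed
    have "A *\<^sub>v v = c \<cdot>\<^sub>v v"
    proof (rule eq_vecI)
      fix i assume i: "i < dim_vec (c \<cdot>\<^sub>v v)"
      hence i': "i < n" unfolding v_def by simp
      have "(A *\<^sub>v v) $ i = (\<Sum>j<n. M (f i) (f j) * x (f j))"
        using i' unfolding A_def v_def by (simp add: mult_mat_vec_def scalar_prod_def lessThan_atLeast0)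
      also have "\<dots> = (\<Sum>j\<in>I. M (f i) j * x j)"
        using sum.reindex_bij_betw[OF f, of "\<lambda>j. M (f i) j * x j"] by (simp add: lessThan_atLeast0)
      also have "\<dots> = c * x (f i)" using ex f i' unfolding bij_betw_def by auto
      finally show "(A *\<^sub>v v) $ i = (c \<cdot>\<^sub>v v) $ i" using i' unfolding v_def by simp
    qed (simp add: A_def v_def)
    hence "eigenvalue A c" unfolding eigenvalue_def eigenvector_def using v v0 A by auto
    thus "c \<in> {c. poly (char_poly A) c = 0}" using eigenvalue_root_char_poly[OF A] by simp
  qed
  have "char_poly A \<noteq> 0" using degree_monic_char_poly[OF A] by auto
  from finite_subset[OF sub poly_roots_finite[OF this]] show ?thesis .
qed

definition Bm :: "'a \<Rightarrow> 'a \<times> 'a \<Rightarrow> real" where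
  "Bm v p = (if v = snd p then 1 else if v = fst p then -1 else 0)"

definition grad :: "('a \<Rightarrow> real) \<Rightarrow> 'a \<times> 'a \<Rightarrow> real" where
  "grad x p = x (snd p) - x (fst p)"

locale og =
  fixes V :: "'a set" and E :: "'a set set" and Or :: "('a \<times> 'a) set"
  assumes sg: "simple_graph V E" and ori: "orientation E Or"
begin

lemma finV: "finite V" using sg unfolding simple_graph_def by auto

lemma edgeE: "e \<in> E \<Longrightarrow> \<exists>u v. u \<in> V \<and> v \<in> V \<and> u \<noteq> v \<and> e = {u, v}"
  using sg unfolding simple_graph_def by auto

lemma E_sub: "E \<subseteq> Pow V" using edgeE by blast

lemma finE: "finite E" using E_sub finV by (meson finite_Pow_iff finite_subset)

lemma Or_edge: "p \<in> Or \<Longrightarrow> {fst p, snd p} \<in> E" using ori unfolding orientation_def by auto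

lemma Or_props: assumes "p \<in> Or" shows "fst p \<in> V" "snd p \<in> V" "fst p \<noteq> snd p"
proof -
  obtain u v where "u \<in> V" "v \<in> V" "u \<noteq> v" "{fst p, snd p} = {u, v}" using edgeE[OF Or_edge[OF assms]] by blast
  thus "fst p \<in> V" "snd p \<in> V" "fst p \<noteq> snd p" by (auto simp: doubleton_eq_iff)
qed

lemma Or_sub: "Or \<subseteq> V \<times> V" using Or_props by force

lemma finOr: "finite Or" using Or_sub finV by (meson finite_SigmaI finite_subset)

lemma Or_unique: "p \<in> Or \<Longrightarrow> q \<in> Or \<Longrightarrow> {fst p, snd p} = {fst q, snd q} \<Longrightarrow> p = q"
  using ori Or_edge unfolding orientation_def by metis

lemma Or_ex: "e \<in> E \<Longrightarrow> \<exists>p\<in>Or. {fst p, snd p} = e"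
  using ori unfolding orientation_def by metis

lemma Or_no_swap: "p \<in> Or \<Longrightarrow> (snd p, fst p) \<in> Or \<Longrightarrow> False"
  using Or_unique[of p "(snd p, fst p)"] Or_props[of p] by (cases p) auto

lemma BV: assumes "p \<in> Or" shows "(\<Sum>v\<in>V. Bm v p * g v) = g (snd p) - g (fst p)"
proof -
  have "(\<Sum>v\<in>V. Bm v p * g v) = (\<Sum>v\<in>V. (if v = snd p then g v else 0) - (if v = fst p then g v else 0))"
    using Or_props[OF assms] by (intro sum.cong refl) (auto simp: Bm_def)
  also have "\<dots> = g (snd p) - g (fst p)" using Or_props[OF assms] finV by (simp add: sum_subtractf)
  finally show ?thesis .
qed

lemma card_inc: "card {p\<in>Or. u \<in> {fst p, snd p}} = Defs.degree E u"
proof -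
  have inj: "inj_on (\<lambda>p. {fst p, snd p}) {p\<in>Or. u \<in> {fst p, snd p}}"
    using Or_unique by (auto intro!: inj_onI)
  have img: "(\<lambda>p. {fst p, snd p}) ` {p\<in>Or. u \<in> {fst p, snd p}} = {e\<in>E. u \<in> e}"
  proof
    show "(\<lambda>p. {fst p, snd p}) ` {p\<in>Or. u \<in> {fst p, snd p}} \<subseteq> {e\<in>E. u \<in> e}" using Or_edge by auto
    show "{e\<in>E. u \<in> e} \<subseteq> (\<lambda>p. {fst p, snd p}) ` {p\<in>Or. u \<in> {fst p, snd p}}"
    proof
      fix e assume "e \<in> {e\<in>E. u \<in> e}"
      then obtain p where "p \<in> Or" "{fst p, snd p} = e" "u \<in> e" using Or_ex by blast
      thus "e \<in> (\<lambda>p. {fst p, snd p}) ` {p\<in>Or. u \<in> {fst p, snd p}}" by force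
    qed
  qed
  show ?thesis unfolding Defs.degree_def using card_image[OF inj] img by simp
qed

lemma K1: assumes u: "u \<in> V" and v: "v \<in> V"
  shows "(\<Sum>p\<in>Or. Bm u p * Bm v p) = laplacian E u v"
proof (cases "u = v")
  case True
  have "(\<Sum>p\<in>Or. Bm u p * Bm v p) = (\<Sum>p\<in>Or. if u \<in> {fst p, snd p} then 1 else 0)"
    using True Or_props by (intro sum.cong refl) (auto simp: Bm_def)
  also have "\<dots> = real (card {p\<in>Or. u \<in> {fst p, snd p}})"
    using finOr by (simp add: sum.If_cases Int_def)
  also have "\<dots> = laplacian E u v" using True card_inc unfolding laplacian_def by simp
  finally show ?thesis .
next
  case False
  have c: "card {p\<in>Or. {fst p, snd p} = {u, v}} = (if {u, v} \<in> E then 1 else 0)"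
  proof (cases "{u, v} \<in> E")
    case True
    then obtain p where p: "p \<in> Or" "{fst p, snd p} = {u, v}" using Or_ex by blast
    have "{p\<in>Or. {fst p, snd p} = {u, v}} = {p}"
    proof
      show "{p\<in>Or. {fst p, snd p} = {u, v}} \<subseteq> {p}"
      proof
        fix q assume "q \<in> {p\<in>Or. {fst p, snd p} = {u, v}}"
        thus "q \<in> {p}" using Or_unique[of q p] p by auto
      qed
    qed (use p in auto)
    thus ?thesis using True by simp
  next
    case F: False
    have "q \<notin> Or" if "{fst q, snd q} = {u, v}" for q using Or_edge[of q] that F by metis
    hence e: "{p\<in>Or. {fst p, snd p} = {u, v}} = {}" by blast
    show ?thesis using F unfolding e by simp
  qed
  have "(\<Sum>p\<in>Or. Bm u p * Bm v p) = (\<Sum>p\<in>Or. if {fst p, snd p} = {u, v} then -1 else 0)"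
    using False Or_props by (intro sum.cong refl) (auto simp: Bm_def doubleton_eq_iff)
  also have "\<dots> = - real (card {p\<in>Or. {fst p, snd p} = {u, v}})"
    using finOr by (simp add: sum.If_cases Int_def)
  also have "\<dots> = - (if {u, v} \<in> E then 1 else 0)" by (simp only: c) simp
  also have "\<dots> = laplacian E u v" using False unfolding laplacian_def by simp
  finally show ?thesis .
qed

lemma lap_sym: "laplacian E u v = laplacian E v u"
  unfolding laplacian_def by (auto simp: insert_commute)

lemma F1: assumes u: "u \<in> V" shows "mv V (laplacian E) x u = (\<Sum>p\<in>Or. Bm u p * grad x p)"
proof -
  have "mv V (laplacian E) x u = (\<Sum>v\<in>V. (\<Sum>p\<in>Or. Bm u p * Bm v p) * x v)"
    unfolding mv_def using K1[OF u] by simp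
  also have "\<dots> = (\<Sum>v\<in>V. \<Sum>p\<in>Or. Bm u p * (Bm v p * x v))"
    by (simp add: sum_distrib_right mult.assoc)
  also have "\<dots> = (\<Sum>p\<in>Or. \<Sum>v\<in>V. Bm u p * (Bm v p * x v))"
    by (rule sum.swap)
  also have "\<dots> = (\<Sum>p\<in>Or. Bm u p * grad x p)"
    by (intro sum.cong refl) (simp add: sum_distrib_left[symmetric] BV grad_def)
  finally show ?thesis .
qed

end

context og begin

abbreviation "H \<equiv> helmholtzian V E"
abbreviation "L \<equiv> laplacian E"

definition Cm where "Cm p q = H p q - (Bm (snd p) q - Bm (fst p) q)"
definition Tris where "Tris p = {T. is_triangle V E T \<and> {fst p, snd p} \<subseteq> T}"
definition ST where "ST p T = {q\<in>Or. q \<noteq> p \<and> {fst q, snd q} \<subseteq> T}"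
definition SS where "SS p = {q\<in>Or. q \<noteq> p \<and> in_common_triangle V E p q}"

lemma H_sym: "H p q = H q p"
proof -
  have 1: "head_tail_adj p q = head_tail_adj q p" unfolding head_tail_adj_def by blast
  have 2: "same_end_adj p q = same_end_adj q p" unfolding same_end_adj_def by auto
  have 3: "in_common_triangle V E p q = in_common_triangle V E q p" unfolding in_common_triangle_def by blast
  show ?thesis unfolding helmholtzian_def 1 2 3 by (cases "p = q") simp_all
qed

lemma H_off: assumes p: "p \<in> Or" and q: "q \<in> Or" and pq: "p \<noteq> q" and nt: "\<not> in_common_triangle V E p q"
  shows "H p q = Bm (snd p) q - Bm (fst p) q"
proof -
  obtain a b where pab: "p = (a, b)" by (cases p)
  obtain c d where qcd: "q = (c, d)" by (cases q)
  have ab: "a \<noteq> b" using Or_props(3)[OF p] pab by simp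
  have cd: "c \<noteq> d" using Or_props(3)[OF q] qcd by simp
  have nsw: "\<not> (a = d \<and> b = c)" using Or_unique[OF p q] pq pab qcd by (auto simp: insert_commute)
  have pq': "\<not> (a = c \<and> b = d)" using pq pab qcd by simp
  have nt': "\<not> in_common_triangle V E (a, b) (c, d)" using nt pab qcd by simp
  have "helmholtzian V E (a, b) (c, d) = Bm b (c, d) - Bm a (c, d)"
    unfolding helmholtzian_def head_tail_adj_def same_end_adj_def Bm_def fst_conv snd_conv
    using ab cd nsw pq' nt' by (cases "b = c"; cases "d = a"; cases "b = d"; cases "a = c") simp_all
  thus ?thesis using pab qcd by simp
qed

lemma Cm_diag: "p \<in> Or \<Longrightarrow> Cm p p = real (tri_count V E p)"
  using Or_props[of p] unfolding Cm_def helmholtzian_def Bm_def by auto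

lemma Cm_off: "p \<in> Or \<Longrightarrow> q \<in> Or \<Longrightarrow> q \<noteq> p \<Longrightarrow>
   Cm p q = (if q \<in> SS p then - (Bm (snd p) q - Bm (fst p) q) else 0)"
  using H_off[of p q] unfolding Cm_def SS_def by (auto simp: helmholtzian_def)

lemma finTris: "finite (Tris p)"
proof -
  have "Tris p \<subseteq> Pow V" unfolding Tris_def is_triangle_def by auto
  thus ?thesis using finV by (meson finite_Pow_iff finite_subset)
qed

lemma tri_count_Tris: "tri_count V E p = card (Tris p)"
  unfolding tri_count_def Tris_def by simp

lemma tri_rep: assumes p: "p \<in> Or" and T: "T \<in> Tris p"
  shows "\<exists>c. T = {fst p, snd p, c} \<and> c \<noteq> fst p \<and> c \<noteq> snd p \<and> {fst p, c} \<in> E \<and> {snd p, c} \<in> E"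
proof -
  let ?a = "fst p" and ?b = "snd p"
  have tri: "is_triangle V E T" and sub: "{?a, ?b} \<subseteq> T" using T unfolding Tris_def by auto
  have c3: "card T = 3" using tri unfolding is_triangle_def by auto
  hence finT: "finite T" by (metis card.infinite zero_neq_numeral)
  have ab: "?a \<noteq> ?b" using Or_props[OF p] by simp
  have "\<not> T \<subseteq> {?a, ?b}"
  proof
    assume "T \<subseteq> {?a, ?b}"
    hence "card T \<le> card {?a, ?b}" by (intro card_mono) auto
    also have "\<dots> \<le> 2" by (simp add: card_insert_le_m1)
    finally show False using c3 by simp
  qed
  then obtain c where c: "c \<in> T" "c \<noteq> ?a" "c \<noteq> ?b" by auto
  have "{?a, ?b, c} \<subseteq> T" using sub c by auto
  moreover have "card {?a, ?b, c} = 3" using ab c by simp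
  ultimately have Teq: "T = {?a, ?b, c}" using card_subset_eq[OF finT] c3 by metis
  have e: "\<forall>u\<in>T. \<forall>v\<in>T. u \<noteq> v \<longrightarrow> {u, v} \<in> E" using tri unfolding is_triangle_def by auto
  have "{?a, c} \<in> E" "{?b, c} \<in> E" using e c sub by auto
  thus ?thesis using Teq c by blast
qed

lemma ST_rep: assumes p: "p \<in> Or" and T: "T = {fst p, snd p, c}" and c: "c \<noteq> fst p" "c \<noteq> snd p"
  and e1: "{fst p, c} \<in> E" and e2: "{snd p, c} \<in> E"
  shows "\<exists>q1 q2. ST p T = {q1, q2} \<and> q1 \<noteq> q2 \<and> q1 \<in> Or \<and> q2 \<in> Or \<and>
     {fst q1, snd q1} = {fst p, c} \<and> {fst q2, snd q2} = {snd p, c}"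
proof -
  let ?a = "fst p" and ?b = "snd p"
  have ab: "?a \<noteq> ?b" using Or_props[OF p] by simp
  obtain q1 where q1: "q1 \<in> Or" "{fst q1, snd q1} = {?a, c}" using Or_ex[OF e1] by blast
  obtain q2 where q2: "q2 \<in> Or" "{fst q2, snd q2} = {?b, c}" using Or_ex[OF e2] by blast
  have "ST p T = {q1, q2}"
  proof
    show "ST p T \<subseteq> {q1, q2}"
    proof
      fix q assume "q \<in> ST p T"
      hence q: "q \<in> Or" "q \<noteq> p" "{fst q, snd q} \<subseteq> {?a, ?b, c}" unfolding ST_def T by auto
      have qn: "fst q \<noteq> snd q" using Or_props[OF q(1)] by simp
      have "{fst q, snd q} \<noteq> {?a, ?b}" using Or_unique[OF q(1) p] q(2) by auto
      hence "{fst q, snd q} = {?a, c} \<or> {fst q, snd q} = {?b, c}"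
        using q(3) qn by (auto simp: doubleton_eq_iff)
      thus "q \<in> {q1, q2}" using Or_unique[OF q(1) q1(1)] Or_unique[OF q(1) q2(1)] q1 q2 by auto
    qed
    have "q1 \<noteq> p" using q1 c ab by (auto simp: doubleton_eq_iff)
    moreover have "q2 \<noteq> p" using q2 c ab by (auto simp: doubleton_eq_iff)
    ultimately show "{q1, q2} \<subseteq> ST p T" using q1 q2 unfolding ST_def T by auto
  qed
  moreover have "q1 \<noteq> q2" using q1 q2 c ab by (auto simp: doubleton_eq_iff)
  ultimately show ?thesis using q1 q2 by blast
qed

lemma SS_union: assumes p: "p \<in> Or" shows "SS p = (\<Union>T\<in>Tris p. ST p T)"
  unfolding SS_def ST_def Tris_def in_common_triangle_def by auto

lemma ST_disj: assumes p: "p \<in> Or" and T: "T \<in> Tris p" and T': "T' \<in> Tris p" and ne: "T \<noteq> T'"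
  shows "ST p T \<inter> ST p T' = {}"
proof (rule ccontr)
  assume "ST p T \<inter> ST p T' \<noteq> {}"
  then obtain q where q: "q \<in> ST p T" "q \<in> ST p T'" by auto
  obtain c where c: "T = {fst p, snd p, c}" "c \<noteq> fst p" "c \<noteq> snd p" "{fst p, c} \<in> E" "{snd p, c} \<in> E"
    using tri_rep[OF p T] by blast
  obtain c' where c': "T' = {fst p, snd p, c'}" "c' \<noteq> fst p" "c' \<noteq> snd p"
    using tri_rep[OF p T'] by blast
  have qO: "q \<in> Or" "q \<noteq> p" using q unfolding ST_def by auto
  have "{fst q, snd q} \<noteq> {fst p, snd p}" using Or_unique[OF qO(1) p] qO(2) by auto
  moreover have "fst q \<noteq> snd q" using Or_props[OF qO(1)] by simp
  moreover have "{fst q, snd q} \<subseteq> T" "{fst q, snd q} \<subseteq> T'" using q unfolding ST_def by auto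
  ultimately have "c \<in> {fst q, snd q}" "c' \<in> {fst q, snd q}" using c c' by auto
  hence "c = c'" using c c' \<open>{fst q, snd q} \<subseteq> T\<close> \<open>{fst q, snd q} \<subseteq> T'\<close> \<open>fst q \<noteq> snd q\<close> by auto
  thus False using ne c c' by simp
qed

lemma sum_SS: assumes p: "p \<in> Or"
  shows "(\<Sum>q\<in>SS p. h q) = (\<Sum>T\<in>Tris p. \<Sum>q\<in>ST p T. h q)"
proof -
  have "(\<Sum>q\<in>SS p. h q) = (\<Sum>q\<in>(\<Union>T\<in>Tris p. ST p T). h q)" using SS_union[OF p] by simp
  also have "\<dots> = (\<Sum>T\<in>Tris p. \<Sum>q\<in>ST p T. h q)"
  proof (rule sum.UNION_disjoint)
    show "finite (Tris p)" by (rule finTris)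
    show "\<forall>T\<in>Tris p. finite (ST p T)" unfolding ST_def using finOr by auto
    show "\<forall>T\<in>Tris p. \<forall>T'\<in>Tris p. T \<noteq> T' \<longrightarrow> ST p T \<inter> ST p T' = {}" using ST_disj[OF p] by blast
  qed
  finally show ?thesis .
qed

lemma val1: assumes "{fst q, snd q} = {a, c}" "a \<noteq> c" "b \<noteq> a" "b \<noteq> c"
  shows "(Bm b q - Bm a q) * (x (snd q) - x (fst q)) = x c - x a"
  using assms by (cases q) (auto simp: Bm_def doubleton_eq_iff)

lemma val2: assumes "{fst q, snd q} = {b, c}" "a \<noteq> c" "b \<noteq> a" "b \<noteq> c"
  shows "(Bm b q - Bm a q) * (x (snd q) - x (fst q)) = x b - x c"
  using assms by (cases q) (auto simp: Bm_def doubleton_eq_iff)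

lemma abs1: assumes "{fst q, snd q} = {a, c} \<or> {fst q, snd q} = {b, c}" "a \<noteq> c" "b \<noteq> a" "b \<noteq> c"
  shows "\<bar>Bm b q - Bm a q\<bar> = 1"
  using assms by (cases q) (auto simp: Bm_def doubleton_eq_iff)

lemma sum_SS_grad: assumes p: "p \<in> Or"
  shows "(\<Sum>q\<in>SS p. (Bm (snd p) q - Bm (fst p) q) * grad x q) = real (tri_count V E p) * grad x p"
proof -
  have "(\<Sum>q\<in>SS p. (Bm (snd p) q - Bm (fst p) q) * grad x q)
      = (\<Sum>T\<in>Tris p. \<Sum>q\<in>ST p T. (Bm (snd p) q - Bm (fst p) q) * grad x q)" by (rule sum_SS[OF p])
  also have "\<dots> = (\<Sum>T\<in>Tris p. grad x p)"
  proof (rule sum.cong[OF refl])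
    fix T assume T: "T \<in> Tris p"
    obtain c where c: "T = {fst p, snd p, c}" "c \<noteq> fst p" "c \<noteq> snd p" "{fst p, c} \<in> E" "{snd p, c} \<in> E"
      using tri_rep[OF p T] by blast
    obtain q1 q2 where q: "ST p T = {q1, q2}" "q1 \<noteq> q2" "{fst q1, snd q1} = {fst p, c}" "{fst q2, snd q2} = {snd p, c}"
      using ST_rep[OF p c] by blast
    have ab: "fst p \<noteq> snd p" using Or_props[OF p] by simp
    show "(\<Sum>q\<in>ST p T. (Bm (snd p) q - Bm (fst p) q) * grad x q) = grad x p"
      using q c ab val1[OF q(3), of "snd p" x] val2[OF q(4), of "fst p" x] unfolding grad_def by simp
  qed
  also have "\<dots> = real (tri_count V E p) * grad x p" by (simp add: tri_count_Tris)
  finally show ?thesis .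
qed

lemma sum_SS_abs: assumes p: "p \<in> Or"
  shows "(\<Sum>q\<in>SS p. \<bar>Bm (snd p) q - Bm (fst p) q\<bar>) = 2 * real (tri_count V E p)"
proof -
  have "(\<Sum>q\<in>SS p. \<bar>Bm (snd p) q - Bm (fst p) q\<bar>)
      = (\<Sum>T\<in>Tris p. \<Sum>q\<in>ST p T. \<bar>Bm (snd p) q - Bm (fst p) q\<bar>)" by (rule sum_SS[OF p])
  also have "\<dots> = (\<Sum>T\<in>Tris p. 2)"
  proof (rule sum.cong[OF refl])
    fix T assume T: "T \<in> Tris p"
    obtain c where c: "T = {fst p, snd p, c}" "c \<noteq> fst p" "c \<noteq> snd p" "{fst p, c} \<in> E" "{snd p, c} \<in> E"
      using tri_rep[OF p T] by blast
    obtain q1 q2 where q: "ST p T = {q1, q2}" "q1 \<noteq> q2" "{fst q1, snd q1} = {fst p, c}" "{fst q2, snd q2} = {snd p, c}"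
      using ST_rep[OF p c] by blast
    have ab: "fst p \<noteq> snd p" using Or_props[OF p] by simp
    show "(\<Sum>q\<in>ST p T. \<bar>Bm (snd p) q - Bm (fst p) q\<bar>) = 2"
      using q c ab abs1[of q1 "fst p" c "snd p"] abs1[of q2 "fst p" c "snd p"] by simp
  qed
  also have "\<dots> = 2 * real (tri_count V E p)" by (simp add: tri_count_Tris)
  finally show ?thesis .
qed

lemma SS_sub: "SS p \<subseteq> Or - {p}" unfolding SS_def by auto

lemma K2: assumes p: "p \<in> Or" shows "(\<Sum>q\<in>Or. Cm p q * grad x q) = 0"
proof -
  have A: "(\<Sum>q\<in>Or. Cm p q * grad x q) = Cm p p * grad x p + (\<Sum>q\<in>Or - {p}. Cm p q * grad x q)"
    using finOr p by (simp add: sum.remove)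
  have B: "(\<Sum>q\<in>Or - {p}. Cm p q * grad x q) = (\<Sum>q\<in>SS p. - ((Bm (snd p) q - Bm (fst p) q) * grad x q))"
  proof (rule sum.mono_neutral_cong_right)
    show "finite (Or - {p})" using finOr by simp
    show "SS p \<subseteq> Or - {p}" by (rule SS_sub)
    show "\<forall>i\<in>Or - {p} - SS p. Cm p i * grad x i = 0" using p by (simp add: Cm_off)
    show "Cm p q * grad x q = - ((Bm (snd p) q - Bm (fst p) q) * grad x q)" if "q \<in> SS p" for q
    proof -
      have qO: "q \<in> Or" "q \<noteq> p" using that SS_sub[of p] by auto
      have "Cm p q = - (Bm (snd p) q - Bm (fst p) q)" using Cm_off[OF p qO] that by simp
      thus ?thesis by (simp only: mult_minus_left)
    qed
  qed
  show ?thesis unfolding A B sum_negf sum_SS_grad[OF p] Cm_diag[OF p] by simp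
qed

lemma gersh: assumes p: "p \<in> Or" shows "(\<Sum>q\<in>Or. \<bar>Cm p q\<bar>) = 3 * real (tri_count V E p)"
proof -
  have A: "(\<Sum>q\<in>Or. \<bar>Cm p q\<bar>) = \<bar>Cm p p\<bar> + (\<Sum>q\<in>Or - {p}. \<bar>Cm p q\<bar>)"
    using finOr p by (simp add: sum.remove)
  have B: "(\<Sum>q\<in>Or - {p}. \<bar>Cm p q\<bar>) = (\<Sum>q\<in>SS p. \<bar>Bm (snd p) q - Bm (fst p) q\<bar>)"
  proof (rule sum.mono_neutral_cong_right)
    show "finite (Or - {p})" using finOr by simp
    show "SS p \<subseteq> Or - {p}" by (rule SS_sub)
    show "\<forall>i\<in>Or - {p} - SS p. \<bar>Cm p i\<bar> = 0" using p by (simp add: Cm_off)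
    show "\<bar>Cm p q\<bar> = \<bar>Bm (snd p) q - Bm (fst p) q\<bar>" if "q \<in> SS p" for q
    proof -
      have qO: "q \<in> Or" "q \<noteq> p" using that SS_sub[of p] by auto
      show ?thesis using Cm_off[OF p qO] that by (simp add: abs_minus_commute)
    qed
  qed
  show ?thesis unfolding A B sum_SS_abs[OF p] Cm_diag[OF p] by simp
qed

end

lemma largest_props:
  assumes fin: "finite I" and ne: "I \<noteq> {}"
    and sym: "\<And>i j. i \<in> I \<Longrightarrow> j \<in> I \<Longrightarrow> M i j = M j i"
  shows "is_eigenvalue I M (largest_eigenvalue I M)"
    and "\<And>c. is_eigenvalue I M c \<Longrightarrow> c \<le> largest_eigenvalue I M"
    and "\<And>y. ip I y (mv I M y) \<le> largest_eigenvalue I M * ip I y y"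
proof -
  have ex: "\<exists>s l. (\<exists>i\<in>I. l i \<noteq> 0) \<and> (\<forall>i\<in>I. mv I M l i = s * l i) \<and>
           (\<forall>y. ip I y (mv I M y) \<le> s * ip I y y)"
    using fin ne sym by (rule top_eig_exists)
  obtain s l where l0: "\<exists>i\<in>I. l i \<noteq> 0" and lev: "\<forall>i\<in>I. mv I M l i = s * l i"
    and ray: "\<forall>y. ip I y (mv I M y) \<le> s * ip I y y"
    using ex by (elim exE conjE) (rule that)
  have sev: "is_eigenvalue I M s" unfolding is_eigenvalue_def using l0 lev unfolding mv_def by blast
  have le: "c \<le> s" if ev: "is_eigenvalue I M c" for c
  proof -
    obtain x where x0: "\<exists>i\<in>I. x i \<noteq> 0" and xev: "\<forall>i\<in>I. mv I M x i = c * x i"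
      using ev unfolding is_eigenvalue_def mv_def[symmetric] by (elim exE conjE) (rule that)
    have "ip I x (mv I M x) = ip I x (\<lambda>i. c * x i)" by (rule ip_cong) (simp_all add: xev)
    also have "\<dots> = c * ip I x x" by (rule ip_scale2)
    finally have eq: "ip I x (mv I M x) = c * ip I x x" .
    have "ip I x (mv I M x) \<le> s * ip I x x" using ray by blast
    hence "c * ip I x x \<le> s * ip I x x" unfolding eq .
    moreover have "ip I x x > 0"
    proof -
      from x0 obtain i where "i \<in> I" "x i \<noteq> 0" by blast
      thus ?thesis by (rule ip_pos[OF fin])
    qed
    ultimately show ?thesis by simp
  qed
  have Meq: "largest_eigenvalue I M = s"
    unfolding largest_eigenvalue_def by (rule Max_eqI[OF eig_finite[OF fin]]) (use le sev in auto)
  show "is_eigenvalue I M (largest_eigenvalue I M)" using sev Meq by simp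
  show "\<And>c. is_eigenvalue I M c \<Longrightarrow> c \<le> largest_eigenvalue I M" using le Meq by simp
  show "\<And>y. ip I y (mv I M y) \<le> largest_eigenvalue I M * ip I y y" using ray Meq by simp
qed

context og begin

definition dv where "dv y u = (\<Sum>p\<in>Or. Bm u p * y p)"

lemma F2: assumes p: "p \<in> Or" shows "mv Or H (grad x) p = grad (mv V L x) p"
proof -
  have "mv Or H (grad x) p = (\<Sum>q\<in>Or. ((Bm (snd p) q - Bm (fst p) q) + Cm p q) * grad x q)"
    unfolding mv_def Cm_def by simp
  also have "\<dots> = (\<Sum>q\<in>Or. Bm (snd p) q * grad x q) - (\<Sum>q\<in>Or. Bm (fst p) q * grad x q) + (\<Sum>q\<in>Or. Cm p q * grad x q)"
    by (simp add: algebra_simps sum.distrib sum_subtractf)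
  also have "\<dots> = mv V L x (snd p) - mv V L x (fst p)"
    using K2[OF p] F1 Or_props[OF p] by simp
  finally show ?thesis unfolding grad_def .
qed

lemma mv_ind: "u \<in> V \<Longrightarrow> mv V L (\<lambda>w. if w = u then 1 else 0) v = L v u"
  unfolding mv_def using finV by (simp add: if_distrib cong: if_cong)

lemma F3: assumes u: "u \<in> V" shows "mv V L (dv z) u = dv (mv Or H z) u"
proof -
  define ind where "ind = (\<lambda>w. if w = u then 1 else (0::real))"
  have g: "\<And>p. p \<in> Or \<Longrightarrow> Bm u p = grad ind p"
    unfolding ind_def grad_def Bm_def using Or_props by auto
  have inner: "(\<Sum>p\<in>Or. H q p * Bm u p) = (\<Sum>w\<in>V. Bm w q * L w u)" if q: "q \<in> Or" for q
  proof -
    have "(\<Sum>p\<in>Or. H q p * Bm u p) = mv Or H (grad ind) q"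
      unfolding mv_def using g by simp
    also have "\<dots> = grad (mv V L ind) q" by (rule F2[OF q])
    also have "\<dots> = L (snd q) u - L (fst q) u" unfolding grad_def ind_def using mv_ind[OF u] by simp
    also have "\<dots> = (\<Sum>w\<in>V. Bm w q * L w u)" using BV[OF q, of "\<lambda>w. L w u"] by simp
    finally show ?thesis .
  qed
  have "dv (mv Or H z) u = (\<Sum>p\<in>Or. \<Sum>q\<in>Or. Bm u p * (H p q * z q))"
    unfolding dv_def mv_def by (simp add: sum_distrib_left)
  also have "\<dots> = (\<Sum>q\<in>Or. \<Sum>p\<in>Or. Bm u p * (H p q * z q))" by (rule sum.swap)
  also have "\<dots> = (\<Sum>q\<in>Or. z q * (\<Sum>p\<in>Or. H q p * Bm u p))"
  proof (intro sum.cong refl)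
    fix q assume "q \<in> Or"
    have "(\<Sum>p\<in>Or. Bm u p * (H p q * z q)) = (\<Sum>p\<in>Or. z q * (H q p * Bm u p))"
      by (intro sum.cong refl) (simp add: H_sym[of _ q])
    thus "(\<Sum>p\<in>Or. Bm u p * (H p q * z q)) = z q * (\<Sum>p\<in>Or. H q p * Bm u p)"
      by (simp add: sum_distrib_left)
  qed
  also have "\<dots> = (\<Sum>q\<in>Or. z q * (\<Sum>w\<in>V. Bm w q * L w u))"
    using inner by simp
  also have "\<dots> = (\<Sum>q\<in>Or. \<Sum>w\<in>V. L u w * (Bm w q * z q))"
    by (intro sum.cong refl) (simp add: sum_distrib_left lap_sym[of u] algebra_simps)
  also have "\<dots> = (\<Sum>w\<in>V. \<Sum>q\<in>Or. L u w * (Bm w q * z q))" by (rule sum.swap)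
  also have "\<dots> = mv V L (dv z) u"
    unfolding mv_def dv_def by (simp add: sum_distrib_left)
  finally show ?thesis by (rule sym)
qed

lemma Down_z: assumes p: "p \<in> Or"
  shows "(\<Sum>q\<in>Or. (Bm (snd p) q - Bm (fst p) q) * z q) = dv z (snd p) - dv z (fst p)"
  unfolding dv_def by (simp add: left_diff_distrib sum_subtractf)

end

context og begin

lemma quad_L: "ip V x (mv V L x) = (\<Sum>p\<in>Or. grad x p * grad x p)"
proof -
  have "ip V x (mv V L x) = (\<Sum>u\<in>V. x u * (\<Sum>p\<in>Or. Bm u p * grad x p))"
    unfolding ip_def by (intro sum.cong refl) (simp add: F1)
  also have "\<dots> = (\<Sum>u\<in>V. \<Sum>p\<in>Or. grad x p * (Bm u p * x u))"
    by (simp add: sum_distrib_left algebra_simps)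
  also have "\<dots> = (\<Sum>p\<in>Or. \<Sum>u\<in>V. grad x p * (Bm u p * x u))" by (rule sum.swap)
  also have "\<dots> = (\<Sum>p\<in>Or. grad x p * grad x p)"
    by (intro sum.cong refl) (simp add: sum_distrib_left[symmetric] BV grad_def)
  finally show ?thesis .
qed

lemma not_loop: "{v, v} \<notin> E"
  using edgeE[of "{v, v}"] by (auto simp: doubleton_eq_iff)

lemma card_N: assumes v0: "v0 \<in> V" shows "card {u\<in>V. {v0, u} \<in> E} = Defs.degree E v0"
proof -
  have inj: "inj_on (\<lambda>u. {v0, u}) {u\<in>V. {v0, u} \<in> E}"
    by (rule inj_onI) (auto simp: doubleton_eq_iff)
  have img: "(\<lambda>u. {v0, u}) ` {u\<in>V. {v0, u} \<in> E} = {e\<in>E. v0 \<in> e}"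
  proof
    show "(\<lambda>u. {v0, u}) ` {u\<in>V. {v0, u} \<in> E} \<subseteq> {e\<in>E. v0 \<in> e}" by auto
    show "{e\<in>E. v0 \<in> e} \<subseteq> (\<lambda>u. {v0, u}) ` {u\<in>V. {v0, u} \<in> E}"
    proof
      fix e assume e: "e \<in> {e\<in>E. v0 \<in> e}"
      then obtain a b where ab: "a \<in> V" "b \<in> V" "a \<noteq> b" "e = {a, b}" using edgeE by blast
      show "e \<in> (\<lambda>u. {v0, u}) ` {u\<in>V. {v0, u} \<in> E}"
      proof (cases "v0 = a")
        case True
        thus ?thesis using ab e by auto
      next
        case False
        hence "v0 = b" using e ab by auto
        hence "e = {v0, a}" using ab by auto
        thus ?thesis using ab e by auto
      qed
    qed
  qed
  show ?thesis unfolding Defs.degree_def using card_image[OF inj] img by simp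
qed

lemma lower: assumes ne: "E \<noteq> {}"
  shows "real (max_degree V E) + 1 \<le> largest_eigenvalue V L"
proof -
  define d where "d = max_degree V E"
  obtain e where e: "e \<in> E" using ne by auto
  then obtain a b where ab: "a \<in> V" "b \<in> V" "a \<noteq> b" "e = {a, b}" using edgeE by blast
  have Vne: "V \<noteq> {}" using ab by auto
  have fimg: "finite (Defs.degree E ` V)" using finV by simp
  have "Defs.degree E a \<ge> 1"
  proof -
    have "finite {e\<in>E. a \<in> e}" using finE by simp
    moreover have "e \<in> {e\<in>E. a \<in> e}" using e ab by auto
    ultimately show ?thesis unfolding Defs.degree_def by (metis One_nat_def Suc_leI card_gt_0_iff empty_iff)
  qed
  moreover have "Defs.degree E a \<le> d" unfolding d_def max_degree_def using fimg ab(1) by simp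
  ultimately have d1: "d \<ge> 1" by simp
  have "d \<in> Defs.degree E ` V" using Max_in[OF fimg] Vne unfolding d_def max_degree_def by simp
  then obtain v0 where v0: "v0 \<in> V" "Defs.degree E v0 = d" by (elim imageE) simp
  define N where "N = {u\<in>V. {v0, u} \<in> E}"
  have cN: "card N = d" unfolding N_def using card_N[OF v0(1)] v0(2) by simp
  have v0N: "v0 \<notin> N" unfolding N_def using not_loop by auto
  have finN: "finite N" unfolding N_def using finV by simp
  define x where "x = (\<lambda>w. if w = v0 then real d else if w \<in> N then -1 else (0::real))"
  have symL: "\<And>i j. i \<in> V \<Longrightarrow> j \<in> V \<Longrightarrow> L i j = L j i" using lap_sym by blast
  note LP = largest_props[OF finV Vne symL]
  have xx: "ip V x x = real d * real d + real d"
  proof -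
    have "ip V x x = (\<Sum>w\<in>V. (if w = v0 then real d * real d else 0) + (if w \<in> N then 1 else 0))"
      unfolding ip_def x_def using v0N by (intro sum.cong refl) auto
    also have "\<dots> = real d * real d + real (card N)"
      using finV v0(1) N_def by (simp add: sum.distrib sum.If_cases Int_absorb1 Int_def)
    finally show ?thesis using cN by simp
  qed
  define P0 where "P0 = {p\<in>Or. v0 \<in> {fst p, snd p}}"
  have cP0: "card P0 = d" unfolding P0_def using card_inc v0(2) by simp
  have gP0: "grad x p * grad x p = (real d + 1) * (real d + 1)" if p: "p \<in> P0" for p
  proof -
    have pO: "p \<in> Or" and v0p: "v0 = fst p \<or> v0 = snd p" using p unfolding P0_def by auto
    have ne': "fst p \<noteq> snd p" using Or_props[OF pO] by simp
    have ed: "{fst p, snd p} \<in> E" using Or_edge[OF pO] .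
    show ?thesis
    proof (cases "v0 = fst p")
      case True
      hence "snd p \<in> N" unfolding N_def using ed Or_props[OF pO] by auto
      hence "x (snd p) = -1" "x (fst p) = real d" unfolding x_def using True ne' v0N by auto
      thus ?thesis unfolding grad_def by (simp add: algebra_simps)
    next
      case False
      hence v0s: "v0 = snd p" using v0p by simp
      hence "fst p \<in> N" unfolding N_def using ed Or_props[OF pO] by (auto simp: insert_commute)
      hence "x (fst p) = -1" "x (snd p) = real d" unfolding x_def using v0s ne' v0N by auto
      thus ?thesis unfolding grad_def by (simp add: algebra_simps)
    qed
  qed
  have "real d * ((real d + 1) * (real d + 1)) = (\<Sum>p\<in>P0. grad x p * grad x p)"
    using gP0 cP0 by simp
  also have "\<dots> \<le> (\<Sum>p\<in>Or. grad x p * grad x p)"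
    by (rule sum_mono2[OF finOr]) (auto simp: P0_def)
  also have "\<dots> = ip V x (mv V L x)" by (rule quad_L[symmetric])
  also have "\<dots> \<le> largest_eigenvalue V L * ip V x x" by (rule LP(3))
  also have "\<dots> = largest_eigenvalue V L * (real d * (real d + 1))" unfolding xx by (simp add: algebra_simps)
  finally have "(real d + 1) * (real d * (real d + 1)) \<le> largest_eigenvalue V L * (real d * (real d + 1))"
    by (simp add: algebra_simps)
  moreover have "real d * (real d + 1) > 0" using d1 by simp
  ultimately show ?thesis unfolding d_def by (meson mult_le_cancel_right_pos)
qed

end

context og begin

lemma tri_le: "tri_count V E p \<le> num_triangles V E"
proof -
  have "{T. is_triangle V E T} \<subseteq> Pow V" unfolding is_triangle_def by auto
  hence fin: "finite {T. is_triangle V E T}" using finV by (meson finite_Pow_iff finite_subset)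
  show ?thesis unfolding tri_count_def num_triangles_def by (rule card_mono[OF fin]) auto
qed

lemma main: assumes ne: "E \<noteq> {}" and tri: "num_triangles V E \<le> (max_degree V E + 1) div 3"
  shows "largest_eigenvalue Or H = largest_eigenvalue V L"
proof -
  obtain e where e: "e \<in> E" using ne by auto
  then obtain a b where ab: "a \<in> V" "b \<in> V" "a \<noteq> b" "e = {a, b}" using edgeE by blast
  have Vne: "V \<noteq> {}" using ab by auto
  obtain p1 where "p1 \<in> Or" using Or_ex[OF e] by blast
  hence Orne: "Or \<noteq> {}" by auto
  have symL: "\<And>i j. i \<in> V \<Longrightarrow> j \<in> V \<Longrightarrow> L i j = L j i" using lap_sym by blast
  have symH: "\<And>i j. i \<in> Or \<Longrightarrow> j \<in> Or \<Longrightarrow> H i j = H j i" using H_sym by blast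
  have LP1: "is_eigenvalue V L (largest_eigenvalue V L)" using finV Vne symL by (rule largest_props(1))
  have LP2: "c \<le> largest_eigenvalue V L" if "is_eigenvalue V L c" for c
    using finV Vne symL that by (rule largest_props(2))
  have HP1: "is_eigenvalue Or H (largest_eigenvalue Or H)" using finOr Orne symH by (rule largest_props(1))
  have HP2: "c \<le> largest_eigenvalue Or H" if "is_eigenvalue Or H c" for c
    using finOr Orne symH that by (rule largest_props(2))
  define mu where "mu = largest_eigenvalue V L"
  define la where "la = largest_eigenvalue Or H"
  have low: "real (max_degree V E) + 1 \<le> mu" unfolding mu_def by (rule lower[OF ne])
  have mupos: "mu > 0" using low by linarith
  have "mu \<le> la"
  proof -
    obtain x where x0: "\<exists>i\<in>V. x i \<noteq> 0" and xev: "\<forall>i\<in>V. mv V L x i = mu * x i"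
      using LP1 unfolding is_eigenvalue_def mv_def[symmetric] mu_def[symmetric] by (elim exE conjE) (rule that)
    have gev: "\<forall>p\<in>Or. mv Or H (grad x) p = mu * grad x p"
    proof
      fix p assume p: "p \<in> Or"
      have "mv Or H (grad x) p = grad (mv V L x) p" by (rule F2[OF p])
      also have "\<dots> = mu * grad x p" unfolding grad_def using xev Or_props[OF p] by (simp add: algebra_simps)
      finally show "mv Or H (grad x) p = mu * grad x p" .
    qed
    have "\<exists>p\<in>Or. grad x p \<noteq> 0"
    proof (rule ccontr)
      assume "\<not> ?thesis"
      hence g0: "\<forall>p\<in>Or. grad x p = 0" by simp
      have "\<forall>u\<in>V. x u = 0"
      proof
        fix u assume u: "u \<in> V"
        have "mu * x u = mv V L x u" using xev u by simp
        also have "\<dots> = 0" unfolding F1[OF u] using g0 by simp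
        finally show "x u = 0" using mupos by simp
      qed
      thus False using x0 by simp
    qed
    hence "is_eigenvalue Or H mu" unfolding is_eigenvalue_def mv_def[symmetric] using gev by blast
    thus ?thesis unfolding la_def by (rule HP2)
  qed
  moreover have "la \<le> mu"
  proof -
    obtain z where z0: "\<exists>p\<in>Or. z p \<noteq> 0" and zev: "\<forall>p\<in>Or. mv Or H z p = la * z p"
      using HP1 unfolding is_eigenvalue_def mv_def[symmetric] la_def[symmetric] by (elim exE conjE) (rule that)
    have Lu: "\<forall>w\<in>V. mv V L (dv z) w = la * dv z w"
    proof
      fix w assume w: "w \<in> V"
      have "mv V L (dv z) w = dv (mv Or H z) w" by (rule F3[OF w])
      also have "\<dots> = (\<Sum>p\<in>Or. Bm w p * (la * z p))" unfolding dv_def using zev by simp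
      also have "\<dots> = la * dv z w" unfolding dv_def by (simp add: sum_distrib_left algebra_simps)
      finally show "mv V L (dv z) w = la * dv z w" .
    qed
    show ?thesis
    proof (cases "\<exists>w\<in>V. dv z w \<noteq> 0")
      case True
      hence "is_eigenvalue V L la" unfolding is_eigenvalue_def mv_def[symmetric] using Lu by blast
      thus ?thesis unfolding mu_def by (rule LP2)
    next
      case False
      hence dz: "\<forall>w\<in>V. dv z w = 0" by simp
      have Cz: "(\<Sum>q\<in>Or. Cm p q * z q) = la * z p" if p: "p \<in> Or" for p
      proof -
        have "(\<Sum>q\<in>Or. Cm p q * z q) = (\<Sum>q\<in>Or. H p q * z q) - (\<Sum>q\<in>Or. (Bm (snd p) q - Bm (fst p) q) * z q)"
          unfolding Cm_def by (simp add: left_diff_distrib sum_subtractf)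
        also have "(\<Sum>q\<in>Or. H p q * z q) = la * z p" using zev p unfolding mv_def by simp
        also have "(\<Sum>q\<in>Or. (Bm (snd p) q - Bm (fst p) q) * z q) = 0"
          unfolding Down_z[OF p] using dz Or_props[OF p] by simp
        finally show ?thesis by simp
      qed
      define Mx where "Mx = Max ((\<lambda>p. \<bar>z p\<bar>) ` Or)"
      have finI: "finite ((\<lambda>p. \<bar>z p\<bar>) ` Or)" using finOr by simp
      have "Mx \<in> (\<lambda>p. \<bar>z p\<bar>) ` Or" unfolding Mx_def using Max_in[OF finI] Orne by simp
      then obtain p0 where p0: "p0 \<in> Or" "\<bar>z p0\<bar> = Mx" by (elim imageE) simp
      have zle: "\<bar>z q\<bar> \<le> \<bar>z p0\<bar>" if "q \<in> Or" for q using p0 that finI unfolding Mx_def by simp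
      have zp0: "\<bar>z p0\<bar> > 0"
      proof -
        from z0 obtain q where "q \<in> Or" "z q \<noteq> 0" by blast
        thus ?thesis using zle[of q] by simp
      qed
      have "\<bar>la\<bar> * \<bar>z p0\<bar> = \<bar>\<Sum>q\<in>Or. Cm p0 q * z q\<bar>" using Cz[OF p0(1)] by (simp add: abs_mult)
      also have "\<dots> \<le> (\<Sum>q\<in>Or. \<bar>Cm p0 q\<bar> * \<bar>z q\<bar>)" by (rule order_trans[OF sum_abs]) (simp add: abs_mult)
      also have "\<dots> \<le> (\<Sum>q\<in>Or. \<bar>Cm p0 q\<bar> * \<bar>z p0\<bar>)"
        by (rule sum_mono) (simp add: mult_left_mono zle)
      also have "\<dots> = 3 * real (tri_count V E p0) * \<bar>z p0\<bar>"
        by (simp add: sum_distrib_right[symmetric] gersh[OF p0(1)])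
      finally have "\<bar>la\<bar> \<le> 3 * real (tri_count V E p0)" using zp0 by simp
      also have "\<dots> \<le> 3 * real (num_triangles V E)" using tri_le[of p0] by simp
      also have "\<dots> \<le> real (max_degree V E) + 1"
      proof -
        have "3 * num_triangles V E \<le> max_degree V E + 1" using tri by linarith
        thus ?thesis by linarith
      qed
      also have "\<dots> \<le> mu" by (rule low)
      finally show ?thesis by simp
    qed
  qed
  ultimately show ?thesis unfolding mu_def la_def by simp
qed

end

theorem corollary5p4:
  fixes V :: "'a set" and E :: "'a set set" and Or :: "('a \<times> 'a) set"
  assumes "simple_graph V E"
    and "E \<noteq> {}"
    and "orientation E Or"
    and "num_triangles V E \<le> (max_degree V E + 1) div 3"
  shows "largest_eigenvalue Or (helmholtzian V E) = largest_eigenvalue V (laplacian E)"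
proof -
  interpret og V E Or using assms(1,3) by unfold_locales
  show ?thesis using main[OF assms(2,4)] .
qed

end
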